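(* Let $k\ge 3$ be odd and let $G$ be a $k$-uniform hypercycle of size $r\ge 2$, with Laplacian tensor $\mathcal L$. Then $\lambda(\mathcal L)=2$.
   Context: A $k$-uniform hypercycle of size $d$ has vertex set $\{i_{j,s}: j\in[d], s\in[k-1]\}$ (all distinct) and edge set $\{\{i_{j,1},\ldots,i_{j,k-1},i_{j+1,1}\}: j\in[d]\}$ where $i_{d+1,1}:=i_{1,1}$. For a $k$-uniform hypergraph $G=(V,E)$ with $V=[n]$ and $d_i$ the number of edges containing $i$, the Laplacian tensor $\mathcal L=\mathcal D-\mathcal A$ ($\mathcal D$ diagonal with entries $d_i$, $\mathcal A$ with entries $\frac1{(k-1)!}$ at index tuples forming an edge and $0$ otherwise) satisfies $(\mathcal L\mathbf x^{k-1})_i=d_ix_i^{k-1}-\sum_{e\in E,\,i\in e}\prod_{s\in e\setminus\{i\}}x_s$. A real $\lambda$ is an H-eigenvalue of $\mathcal L$ if some nonzero $\mathbf x\in\mathbb R^n$ satisfies $(\mathcal L\mathbf x^{k-1})_i=\lambda x_i^{k-1}$ for all $i$; $\lambda(\mathcal L)$ is the largest H-eigenvalue. *)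

theory Defs
  imports Complex_Main
begin

text \<open>A hypergraph on vertex set [n] = {1..n} is given by its edge set E (a set of
  vertex sets).\<close>

definition degree :: "nat set set \<Rightarrow> nat \<Rightarrow> nat" where
  "degree E i = card {e \<in> E. i \<in> e}"

text \<open>The i-th component of L x^(k-1), for the Laplacian tensor L = D - A of the
  k-uniform hypergraph (vertex set [n], edges E).\<close>
definition laplacian_apply :: "nat \<Rightarrow> nat set set \<Rightarrow> (nat \<Rightarrow> real) \<Rightarrow> nat \<Rightarrow> real" where
  "laplacian_apply k E x i =
     real (degree E i) * x i ^ (k - 1) - (\<Sum>e\<in>{e \<in> E. i \<in> e}. \<Prod>s\<in>e - {i}. x s)"

definition is_H_eigenvalue :: "nat \<Rightarrow> nat \<Rightarrow> nat set set \<Rightarrow> real \<Rightarrow> bool" where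
  "is_H_eigenvalue k n E lam \<longleftrightarrow>
     (\<exists>x :: nat \<Rightarrow> real. (\<exists>i\<in>{1..n}. x i \<noteq> 0) \<and>
        (\<forall>i\<in>{1..n}. laplacian_apply k E x i = lam * x i ^ (k - 1)))"

definition largest_H_eigenvalue :: "nat \<Rightarrow> nat \<Rightarrow> nat set set \<Rightarrow> real" where
  "largest_H_eigenvalue k n E = (GREATEST lam. is_H_eigenvalue k n E lam)"

text \<open>E on vertex set [n] is a k-uniform hypercycle of size d: the vertices are
  labelled bijectively as i_{j,s} (j in [d], s in [k-1]) and the edges are
  {i_{j,1},...,i_{j,k-1}, i_{j+1,1}} for j in [d], with i_{d+1,1} = i_{1,1}.\<close>
definition is_hypercycle :: "nat \<Rightarrow> nat \<Rightarrow> nat \<Rightarrow> nat set set \<Rightarrow> bool" where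
  "is_hypercycle k d n E \<longleftrightarrow>
     (\<exists>f :: nat \<times> nat \<Rightarrow> nat.
        bij_betw f ({1..d} \<times> {1..k-1}) {1..n} \<and>
        E = (\<lambda>j. f ` ({j} \<times> {1..k-1}) \<union> {f (if j = d then 1 else j + 1, 1)}) ` {1..d})"

end

theory Submission
  imports Defs
begin


lemma odd_pow_less_imp: "odd k \<Longrightarrow> (x::real)^k < y^k \<Longrightarrow> x < y"
proof -
  assume k: "odd k" and h: "x^k < y^k"
  have "k > 0" using k by (cases k) auto
  have "root k (x^k) < root k (y^k)" using h \<open>k>0\<close> by simp
  thus ?thesis using odd_real_root_power_cancel[OF k] by simp
qed

lemma odd_pow_inj: "odd k \<Longrightarrow> (x::real)^k = y^k \<Longrightarrow> x = y"
  by (metis odd_real_root_power_cancel)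

lemma alg_pos:
  fixes a b :: "nat \<Rightarrow> real" and nx pv :: "nat \<Rightarrow> nat" and J :: "nat set"
  assumes k: "odd k" and t: "t > 1"
    and cl: "\<And>j. j \<in> J \<Longrightarrow> nx j \<in> J \<and> pv j \<in> J \<and> nx (pv j) = j \<and> pv (nx j) = j"
    and H1: "\<And>j. j \<in> J \<Longrightarrow> b j \<noteq> 0 \<Longrightarrow> a j * a (nx j) = - t * (b j)^2"
    and H2: "\<And>j. j \<in> J \<Longrightarrow> (t - 1) * a j ^ k = t * (b (pv j) ^ k + b j ^ k)"
    and j0: "j0 \<in> J" and pos: "a j0 > 0" and mx: "\<And>j. j \<in> J \<Longrightarrow> \<bar>a j\<bar> \<le> a j0"
  shows False
proof -
  have "0 < (t-1) * a j0 ^ k" using t pos by simp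
  hence "0 < t * (b (pv j0) ^ k + b j0 ^ k)" using H2[OF j0] by simp
  hence "0 < b (pv j0) ^ k + b j0 ^ k" using t by (simp add: zero_less_mult_iff)
  hence "b j0 > 0 \<or> b (pv j0) > 0"
  proof (rule contrapos_pp)
    assume "\<not> (b j0 > 0 \<or> b (pv j0) > 0)"
    moreover have "k > 0" using k by (cases k) auto
    ultimately have "b j0 ^ k \<le> 0" "b (pv j0) ^ k \<le> 0" using k by (auto simp: power_le_zero_eq)
    thus "\<not> 0 < b (pv j0) ^ k + b j0 ^ k" by simp
  qed
  thus False
  proof
    assume bp: "b j0 > 0"
    define j1 where "j1 = nx j0"
    define j2 where "j2 = nx j1"
    have j1: "j1 \<in> J" and j2: "j2 \<in> J" and pj1: "pv j1 = j0" using cl j0 unfolding j1_def j2_def by auto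
    have e1: "a j0 * a j1 = - t * (b j0)^2" using H1[OF j0] bp unfolding j1_def by simp
    have "- t * (b j0)^2 < 0" using t bp by simp
    hence "a j0 * a j1 < 0" using e1 by simp
    hence a1: "a j1 < 0" using pos by (simp add: mult_less_0_iff)
    have "(t-1) * a j1 ^ k < 0" using t a1 k by (simp add: mult_pos_neg)
    hence "t * (b j0 ^ k + b j1 ^ k) < 0" using H2[OF j1] pj1 by simp
    hence "b j0 ^ k + b j1 ^ k < 0" using t by (simp add: mult_less_0_iff)
    hence "b j1 ^ k < (- b j0) ^ k" using k by simp
    hence lt: "b j1 < - b j0" using odd_pow_less_imp[OF k] by blast
    have "(b j0)^2 < (- b j1)^2" using bp lt by (intro power_strict_mono) auto
    hence sq: "(b j0)^2 < (b j1)^2" by simp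
    have "b j1 \<noteq> 0" using lt bp by simp
    hence e2: "a j1 * a j2 = - t * (b j1)^2" using H1[OF j1] unfolding j2_def by simp
    have "\<bar>a j1 * a j2\<bar> = t * (b j1)^2" using e2 t by simp
    hence "\<bar>a j1\<bar> * \<bar>a j2\<bar> = t * (b j1)^2" by (simp add: abs_mult)
    also have "\<dots> > t * (b j0)^2" using sq t by simp
    also have "t * (b j0)^2 = \<bar>a j1\<bar> * a j0" using e1 pos a1 by (simp add: abs_if algebra_simps)
    finally have "\<bar>a j1\<bar> * a j0 < \<bar>a j1\<bar> * \<bar>a j2\<bar>" .
    hence "a j0 < \<bar>a j2\<bar>" by (simp add: mult_less_cancel_left)
    thus False using mx[OF j2] by simp
  next
    assume bp: "b (pv j0) > 0"
    define j1 where "j1 = pv j0"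
    define j2 where "j2 = pv j1"
    have j1: "j1 \<in> J" and j2: "j2 \<in> J" and nj1: "nx j1 = j0" and nj2: "nx j2 = j1"
      using cl j0 unfolding j1_def j2_def by auto
    have e1: "a j1 * a j0 = - t * (b j1)^2" using H1[OF j1] bp nj1 unfolding j1_def by simp
    have "- t * (b j1)^2 < 0" using t bp unfolding j1_def by simp
    hence "a j1 * a j0 < 0" using e1 by simp
    hence a1: "a j1 < 0" using pos by (simp add: mult_less_0_iff)
    have "(t-1) * a j1 ^ k < 0" using t a1 k by (simp add: mult_pos_neg)
    hence "t * (b j2 ^ k + b j1 ^ k) < 0" using H2[OF j1] unfolding j2_def by simp
    hence "b j2 ^ k + b j1 ^ k < 0" using t by (simp add: mult_less_0_iff)
    hence "b j2 ^ k < (- b j1) ^ k" using k by simp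
    hence lt: "b j2 < - b j1" using odd_pow_less_imp[OF k] by blast
    have bp': "b j1 > 0" using bp unfolding j1_def .
    have "(b j1)^2 < (- b j2)^2" using bp' lt by (intro power_strict_mono) auto
    hence sq: "(b j1)^2 < (b j2)^2" by simp
    have "b j2 \<noteq> 0" using lt bp' by simp
    hence e2: "a j2 * a j1 = - t * (b j2)^2" using H1[OF j2] nj2 by simp
    have "\<bar>a j2 * a j1\<bar> = t * (b j2)^2" using e2 t by simp
    hence "\<bar>a j1\<bar> * \<bar>a j2\<bar> = t * (b j2)^2" by (simp add: abs_mult mult.commute)
    also have "\<dots> > t * (b j1)^2" using sq t by simp
    also have "t * (b j1)^2 = \<bar>a j1\<bar> * a j0" using e1 pos a1 by (simp add: abs_if algebra_simps)
    finally have "\<bar>a j1\<bar> * a j0 < \<bar>a j1\<bar> * \<bar>a j2\<bar>" .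
    hence "a j0 < \<bar>a j2\<bar>" by (simp add: mult_less_cancel_left)
    thus False using mx[OF j2] by simp
  qed
qed

lemma alg:
  fixes a b :: "nat \<Rightarrow> real" and nx pv :: "nat \<Rightarrow> nat" and J :: "nat set"
  assumes fin: "finite J" and k: "odd k" and t: "t > 1"
    and cl: "\<And>j. j \<in> J \<Longrightarrow> nx j \<in> J \<and> pv j \<in> J \<and> nx (pv j) = j \<and> pv (nx j) = j"
    and H1: "\<And>j. j \<in> J \<Longrightarrow> b j \<noteq> 0 \<Longrightarrow> a j * a (nx j) = - t * (b j)^2"
    and H2: "\<And>j. j \<in> J \<Longrightarrow> (t - 1) * a j ^ k = t * (b (pv j) ^ k + b j ^ k)"
  shows "\<forall>j\<in>J. a j = 0"
proof (rule ccontr)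
  assume "\<not> ?thesis"
  then obtain j where jJ: "j \<in> J" and "a j \<noteq> 0" by blast
  obtain j0 where j0: "j0 \<in> J" and mx: "\<And>j. j \<in> J \<Longrightarrow> \<bar>a j\<bar> \<le> \<bar>a j0\<bar>"
  proof -
    have "Max ((\<lambda>j. \<bar>a j\<bar>) ` J) \<in> (\<lambda>j. \<bar>a j\<bar>) ` J" using fin jJ by (intro Max_in) auto
    then obtain j0 where "j0 \<in> J" "\<bar>a j0\<bar> = Max ((\<lambda>j. \<bar>a j\<bar>) ` J)" by auto
    thus ?thesis using that fin by auto
  qed
  have "a j0 \<noteq> 0" using mx[OF jJ] \<open>a j \<noteq> 0\<close> by auto
  show False
  proof (cases "a j0 > 0")
    case True
    show False by (rule alg_pos[OF k t cl H1 H2 j0 True]) (use mx True in auto)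
  next
    case False
    hence neg: "- a j0 > 0" using \<open>a j0 \<noteq> 0\<close> by simp
    show False
    proof (rule alg_pos[of k t J nx pv "\<lambda>j. - b j" "\<lambda>j. - a j", OF k t cl _ _ j0 neg])
      fix j assume "j \<in> J" "- b j \<noteq> 0" thus "- a j * - a (nx j) = - t * (- b j)\<^sup>2" using H1 by simp
    next
      fix j assume "j \<in> J" thus "(t - 1) * (- a j) ^ k = t * ((- b (pv j)) ^ k + (- b j) ^ k)"
        using H2 k by (simp add: algebra_simps)
    next
      fix j assume "j \<in> J" thus "\<bar>- a j\<bar> \<le> - a j0" using mx neg by fastforce
    qed (auto simp: cl)
  qed
qed


locale hc = fixes k r :: nat and f :: "nat \<times> nat \<Rightarrow> nat"
  assumes k3: "k \<ge> 3" and r2: "r \<ge> 2" and inj: "inj_on f ({1..r} \<times> {1..k-1})"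
begin

definition nx where "nx j = (if j = r then 1 else j + 1)"
definition pv where "pv j = (if j = 1 then r else j - 1)"
definition edg where "edg j = f ` ({j} \<times> {1..k-1}) \<union> {f (nx j, 1)}"

lemma cl: "j \<in> {1..r} \<Longrightarrow> nx j \<in> {1..r} \<and> pv j \<in> {1..r} \<and> nx (pv j) = j \<and> pv (nx j) = j \<and> nx j \<noteq> j \<and> pv j \<noteq> j"
  using r2 by (auto simp: nx_def pv_def)

lemma finf: "f (j, s) = f (j', s') \<Longrightarrow> j \<in> {1..r} \<Longrightarrow> j' \<in> {1..r} \<Longrightarrow> s \<in> {1..k-1} \<Longrightarrow> s' \<in> {1..k-1}
   \<Longrightarrow> j = j' \<and> s = s'"
  using inj unfolding inj_on_def by blast

lemma mem: assumes j: "j \<in> {1..r}" and j': "j' \<in> {1..r}" and s: "s \<in> {1..k-1}"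
  shows "f (j', s) \<in> edg j \<longleftrightarrow> j' = j \<or> (j' = nx j \<and> s = 1)"
proof -
  have n: "nx j \<in> {1..r}" using cl[OF j] by simp
  have one: "(1::nat) \<in> {1..k-1}" using k3 by simp
  show ?thesis
    unfolding edg_def using finf[OF _ j' _ s] finf[OF _ j' n s one] s j by auto
qed

lemma fin_edg: "finite (edg j)" by (simp add: edg_def)

lemma edg_inj: assumes "j \<in> {1..r}" "j' \<in> {1..r}" "edg j = edg j'" shows "j = j'"
proof -
  have two: "(2::nat) \<in> {1..k-1}" using k3 by simp
  have "f (j, 2) \<in> edg j" using mem[OF assms(1) assms(1) two] by simp
  hence "f (j, 2) \<in> edg j'" using assms by simp
  thus ?thesis using mem[OF assms(2) assms(1) two] by simp
qed

lemma inc2: assumes j: "j \<in> {1..r}" and s: "s \<in> {2..k-1}"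
  shows "{e \<in> edg ` {1..r}. f (j, s) \<in> e} = {edg j}"
proof -
  have s': "s \<in> {1..k-1}" using s by simp
  show ?thesis using mem[OF _ j s'] s j by auto
qed

lemma inc1: assumes j: "j \<in> {1..r}"
  shows "{e \<in> edg ` {1..r}. f (j, 1) \<in> e} = {edg j, edg (pv j)}"
proof -
  have one: "(1::nat) \<in> {1..k-1}" using k3 by simp
  have p: "pv j \<in> {1..r}" "nx (pv j) = j" using cl[OF j] by auto
  have "\<And>j'. j' \<in> {1..r} \<Longrightarrow> f (j,1) \<in> edg j' \<longleftrightarrow> j' = j \<or> j' = pv j"
  proof -
    fix j' assume j': "j' \<in> {1..r}"
    have "f (j,1) \<in> edg j' \<longleftrightarrow> j = j' \<or> j = nx j'" using mem[OF j' j one] by simp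
    also have "\<dots> \<longleftrightarrow> j' = j \<or> j' = pv j" using cl[OF j'] cl[OF j] by metis
    finally show "f (j,1) \<in> edg j' \<longleftrightarrow> j' = j \<or> j' = pv j" .
  qed
  thus ?thesis using j p by auto
qed

lemma deg1: "j \<in> {1..r} \<Longrightarrow> card {e \<in> edg ` {1..r}. f (j, 1) \<in> e} = 2"
  using inc1 edg_inj cl by (metis card_2_iff)

lemma edg_split: assumes j: "j \<in> {1..r}"
  shows "edg j = insert (f (j,1)) (insert (f (nx j, 1)) (f ` ({j} \<times> {2..k-1})))"
    and "f (j,1) \<noteq> f (nx j, 1)" "f (j,1) \<notin> f ` ({j} \<times> {2..k-1})" "f (nx j,1) \<notin> f ` ({j} \<times> {2..k-1})"
    and "inj_on (\<lambda>s. f (j, s)) {2..k-1}"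
proof -
  have "{1..k-1} = insert 1 {2..k-1}" using k3 by auto
  thus "edg j = insert (f (j,1)) (insert (f (nx j, 1)) (f ` ({j} \<times> {2..k-1})))" unfolding edg_def by auto
  have n: "nx j \<in> {1..r}" "nx j \<noteq> j" using cl[OF j] by auto
  have one: "(1::nat) \<in> {1..k-1}" using k3 by simp
  show "f (j,1) \<noteq> f (nx j, 1)" using finf[OF _ j n(1) one one] n by auto
  show "f (j,1) \<notin> f ` ({j} \<times> {2..k-1})" using finf[OF _ j j one] by force
  show "f (nx j,1) \<notin> f ` ({j} \<times> {2..k-1})" using finf[OF _ n(1) j one] n by force
  show "inj_on (\<lambda>s. f (j, s)) {2..k-1}" using finf[OF _ j j] by (auto simp: inj_on_def)
qed

lemma prod_edg: assumes j: "j \<in> {1..r}"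
  shows "prod x (edg j) = x (f (j,1)) * x (f (nx j, 1)) * (\<Prod>s\<in>{2..k-1}. x (f (j, s)))"
proof -
  have "prod x (f ` ({j} \<times> {2..k-1})) = (\<Prod>s\<in>{2..k-1}. x (f (j, s)))"
  proof -
    have "f ` ({j} \<times> {2..k-1}) = (\<lambda>s. f (j, s)) ` {2..k-1}" by auto
    thus ?thesis using prod.reindex[OF edg_split(5)[OF j], of x] by simp
  qed
  thus ?thesis using edg_split[OF j] by (simp add: mult.assoc)
qed





lemma eig2: assumes "bij_betw f ({1..r} \<times> {1..k-1}) {1..n}"
  shows "is_H_eigenvalue k n (edg ` {1..r}) 2"
proof -
  define c where "c = f (1,1)"
  define x where "x = (\<lambda>v. if v = c then (1::real) else 0)"
  have one: "(1::nat) \<in> {1..k-1}" and two: "(2::nat) \<in> {1..k-1}" using k3 by auto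
  have r1: "(1::nat) \<in> {1..r}" using r2 by simp
  have cn: "c \<in> {1..n}" using assms one r1 unfolding c_def bij_betw_def by auto
  have pz: "prod x (e - {v}) = 0" if e: "e \<in> edg ` {1..r}" "v \<in> e" for e v
  proof -
    obtain j where j: "j \<in> {1..r}" "e = edg j" using e by auto
    have n: "nx j \<in> {1..r}" "nx j \<noteq> j" using cl[OF j(1)] by auto
    have d1: "f (j,1) \<noteq> f (nx j,1)" using edg_split(2)[OF j(1)] .
    have d2: "f (j,2) \<noteq> f (nx j,1)" "f (j,2) \<noteq> f (j,1)" using finf[OF _ j(1) n(1) two one] finf[OF _ j(1) j(1) two one] n by auto
    have ins: "f (j,1) \<in> e" "f (j,2) \<in> e" "f (nx j,1) \<in> e" using j(2) mem[OF j(1) j(1) one] mem[OF j(1) j(1) two] mem[OF j(1) n(1) one] by auto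
    obtain w where "w \<in> e - {v}" "w \<noteq> c" using ins d1 d2 by (metis Diff_iff singletonD)
    hence "w \<in> e - {v}" "x w = 0" unfolding x_def by auto
    moreover have "finite (e - {v})" using j(2) fin_edg by simp
    ultimately show ?thesis by (meson prod_zero_iff)
  qed
  show ?thesis unfolding is_H_eigenvalue_def
  proof (intro exI conjI ballI)
    show "\<exists>i\<in>{1..n}. x i \<noteq> 0" using cn unfolding x_def by auto
  next
    fix i assume "i \<in> {1..n}"
    have sz: "(\<Sum>e\<in>{e \<in> edg ` {1..r}. i \<in> e}. \<Prod>s\<in>e - {i}. x s) = 0"
      using pz by (intro sum.neutral) auto
    have km: "k - 1 > 0" using k3 by simp
    show "laplacian_apply k (edg ` {1..r}) x i = 2 * x i ^ (k - 1)"
    proof (cases "i = c")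
      case True
      have "degree (edg ` {1..r}) i = 2" unfolding degree_def True c_def using deg1[OF r1] .
      thus ?thesis unfolding laplacian_apply_def sz using True by (simp add: x_def)
    next
      case False
      thus ?thesis unfolding laplacian_apply_def sz using km by (simp add: x_def)
    qed
  qed
qed





lemma ub: assumes bij: "bij_betw f ({1..r} \<times> {1..k-1}) {1..n}" and k: "odd k"
  and ev: "is_H_eigenvalue k n (edg ` {1..r}) lam"
  shows "lam \<le> 2"
proof (rule ccontr)
  assume "\<not> lam \<le> 2"
  hence lam: "lam > 2" by simp
  obtain x where nz: "\<exists>i\<in>{1..n}. x i \<noteq> 0"
    and eq: "\<And>i. i \<in> {1..n} \<Longrightarrow> laplacian_apply k (edg ` {1..r}) x i = lam * x i ^ (k - 1)"
    using ev unfolding is_H_eigenvalue_def by blast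
  define a where "a j = x (f (j,1))" for j
  define b where "b j = x (f (j,2))" for j
  define Q where "Q j = prod x (edg j)" for j
  define t where "t = lam - 1"
  have t: "t > 1" using lam t_def by simp
  have one: "(1::nat) \<in> {1..k-1}" and two: "(2::nat) \<in> {1..k-1}" using k3 by auto
  have kk: "k = Suc (k-1)" using k3 by simp
  have fn: "f (j, s) \<in> {1..n}" if "j \<in> {1..r}" "s \<in> {1..k-1}" for j s
    using bij that unfolding bij_betw_def by auto
  have B: "(1 - lam) * x (f (j,s)) ^ k = Q j" if j: "j \<in> {1..r}" and s: "s \<in> {2..k-1}" for j s
  proof -
    have s': "s \<in> {1..k-1}" using s by simp
    let ?v = "f (j,s)"
    have vin: "?v \<in> edg j" using mem[OF j j s'] by simp
    have L: "laplacian_apply k (edg ` {1..r}) x ?v = x ?v ^ (k-1) - prod x (edg j - {?v})"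
      unfolding laplacian_apply_def degree_def inc2[OF j s] by simp
    have "x ?v ^ (k-1) - prod x (edg j - {?v}) = lam * x ?v ^ (k-1)" using eq[OF fn[OF j s']] L by simp
    hence "x ?v * (x ?v ^ (k-1) - prod x (edg j - {?v})) = x ?v * (lam * x ?v ^ (k-1))" by simp
    moreover have "Q j = x ?v * prod x (edg j - {?v})" unfolding Q_def using prod.remove[OF fin_edg vin] .
    moreover have "x ?v ^ k = x ?v * x ?v ^ (k-1)" by (subst kk) simp
    ultimately show ?thesis by (simp add: algebra_simps)
  qed
  have Beq: "x (f (j,s)) = b j" if j: "j \<in> {1..r}" and s: "s \<in> {2..k-1}" for j s
  proof -
    have s2: "(2::nat) \<in> {2..k-1}" using k3 by simp
    have "(1 - lam) * x (f (j,s)) ^ k = (1 - lam) * b j ^ k" using B[OF j s] B[OF j s2] unfolding b_def by simp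
    hence "x (f (j,s)) ^ k = b j ^ k" using lam by simp
    thus ?thesis using odd_pow_inj[OF k] by blast
  qed
  have Qf: "Q j = a j * a (nx j) * b j ^ (k-2)" if j: "j \<in> {1..r}" for j
  proof -
    have "(\<Prod>s\<in>{2..k-1}. x (f (j, s))) = (\<Prod>s\<in>{2..k-1}. b j)" using Beq[OF j] by (intro prod.cong) auto
    also have "\<dots> = b j ^ (k-2)" by (simp add: numeral_2_eq_2)
    finally show ?thesis unfolding Q_def prod_edg[OF j] a_def by simp
  qed
  have QB: "Q j = (1 - lam) * b j ^ k" if j: "j \<in> {1..r}" for j
  proof -
    have s2: "(2::nat) \<in> {2..k-1}" using k3 by simp
    show ?thesis using B[OF j s2] unfolding b_def by simp
  qed
  have H1: "a j * a (nx j) = - t * (b j)^2" if j: "j \<in> {1..r}" and bz: "b j \<noteq> 0" for j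
  proof -
    have k2: "k = (k-2) + 2" using k3 by simp
    have kp: "b j ^ k = b j ^ (k-2) * (b j)^2" by (subst k2) (simp only: power_add)
    have "a j * a (nx j) * b j ^ (k-2) = (- t * (b j)^2) * b j ^ (k-2)"
      using Qf[OF j] QB[OF j] kp unfolding t_def by (simp add: algebra_simps)
    moreover have "b j ^ (k-2) \<noteq> 0" using bz by simp
    ultimately show ?thesis by (metis mult_cancel_right)
  qed
  have H2: "(t - 1) * a j ^ k = t * (b (pv j) ^ k + b j ^ k)" if j: "j \<in> {1..r}" for j
  proof -
    let ?v = "f (j,1)"
    have p: "pv j \<in> {1..r}" "nx (pv j) = j" "pv j \<noteq> j" using cl[OF j] by auto
    have ne: "edg j \<noteq> edg (pv j)" using edg_inj[OF j p(1)] p(3) by metis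
    have vin: "?v \<in> edg j" "?v \<in> edg (pv j)" using mem[OF j j one] mem[OF p(1) j one] p(2) by auto
    have L: "laplacian_apply k (edg ` {1..r}) x ?v = 2 * x ?v ^ (k-1) - (prod x (edg j - {?v}) + prod x (edg (pv j) - {?v}))"
      unfolding laplacian_apply_def degree_def inc1[OF j] using ne by simp
    have "2 * x ?v ^ (k-1) - (prod x (edg j - {?v}) + prod x (edg (pv j) - {?v})) = lam * x ?v ^ (k-1)"
      using eq[OF fn[OF j one]] L by simp
    hence "x ?v * (2 * x ?v ^ (k-1) - (prod x (edg j - {?v}) + prod x (edg (pv j) - {?v}))) = x ?v * (lam * x ?v ^ (k-1))" by simp
    moreover have "Q j = x ?v * prod x (edg j - {?v})" unfolding Q_def using prod.remove[OF fin_edg vin(1)] .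
    moreover have "Q (pv j) = x ?v * prod x (edg (pv j) - {?v})" unfolding Q_def using prod.remove[OF fin_edg vin(2)] .
    moreover have "x ?v ^ k = x ?v * x ?v ^ (k-1)" by (subst kk) simp
    ultimately have "2 * x ?v ^ k - (Q j + Q (pv j)) = lam * x ?v ^ k" by (simp add: algebra_simps)
    thus ?thesis using QB[OF j] QB[OF p(1)] unfolding t_def a_def by (simp add: algebra_simps)
  qed
  have az: "\<forall>j\<in>{1..r}. a j = 0"
  proof (rule alg[OF _ k t, of "{1..r}" nx pv b a])
    show "finite {1..r}" by simp
  next
    fix j assume "j \<in> {1..r}"
    thus "nx j \<in> {1..r} \<and> pv j \<in> {1..r} \<and> nx (pv j) = j \<and> pv (nx j) = j" using cl[of j] by simp
  next
    fix j assume "j \<in> {1..r}" "b j \<noteq> 0"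
    thus "a j * a (nx j) = - t * (b j)\<^sup>2" by (rule H1)
  next
    fix j assume "j \<in> {1..r}"
    thus "(t - 1) * a j ^ k = t * (b (pv j) ^ k + b j ^ k)" by (rule H2)
  qed
  have bz: "b j = 0" if j: "j \<in> {1..r}" for j
  proof (rule ccontr)
    assume "b j \<noteq> 0"
    hence "a j * a (nx j) = - t * (b j)^2" using H1[OF j] by simp
    moreover have "- t * (b j)^2 \<noteq> 0" using t \<open>b j \<noteq> 0\<close> by simp
    ultimately show False using az j by simp
  qed
  have "x i = 0" if i: "i \<in> {1..n}" for i
  proof -
    have "i \<in> f ` ({1..r} \<times> {1..k-1})" using bij i unfolding bij_betw_def by simp
    then obtain p where p: "p \<in> {1..r} \<times> {1..k-1}" "i = f p" by blast
    obtain j s where "p = (j, s)" by fastforce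
    hence js: "j \<in> {1..r}" "s \<in> {1..k-1}" "i = f (j,s)" using p by auto
    show ?thesis
    proof (cases "s = 1")
      case True thus ?thesis using az js unfolding a_def by simp
    next
      case False
      hence "s \<in> {2..k-1}" using js by simp
      thus ?thesis using Beq[OF js(1)] bz[OF js(1)] js by simp
    qed
  qed
  thus False using nz by blast
qed

end

theorem proposition4p1:
  fixes k r n :: nat and E :: "nat set set"
  assumes "odd k" and "k \<ge> 3" and "r \<ge> 2"
    and "is_hypercycle k r n E"
  shows "largest_H_eigenvalue k n E = 2"
proof -
  obtain f where bij: "bij_betw f ({1..r} \<times> {1..k-1}) {1..n}"
    and Ed: "E = (\<lambda>j. f ` ({j} \<times> {1..k-1}) \<union> {f (if j = r then 1 else j + 1, 1)}) ` {1..r}"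
    using assms(4) unfolding is_hypercycle_def by blast
  interpret hc k r f using assms(2,3) bij by unfold_locales (auto simp: bij_betw_def)
  have E: "E = edg ` {1..r}" unfolding Ed edg_def nx_def ..
  show ?thesis unfolding largest_H_eigenvalue_def E
    by (rule Greatest_equality) (use eig2[OF bij] ub[OF bij assms(1)] in auto)
qed

end
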